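(* For all integers $N\ge 1$ and $k\ge 1$, $$\mathbb{E}[\mathcal{R}_{k+1}(N+1)]=\sum_{1\le j_1<j_2<\dots<j_k\le N}\frac{1}{j_1 j_2\cdots j_k},$$ (the sum being $0$ if $k>N$); moreover $\mathcal{R}_1(N)=1$ for all $N\ge1$. In particular $\mathbb{E}[\mathcal{R}_{N}(N)]=1/(N-1)!$ and $\mathbb{E}[\mathcal{R}_3(N+1)]=\tfrac12\big(H_N^2-H_N^{(2)}\big)$, where $H_N=\sum_{i\le N}1/i$, $H_N^{(2)}=\sum_{i\le N}1/i^2$.
   Context: A random recursive hypergraph (RRH) is the random hypergraph process defined as follows. At size $N=1$ it has vertex set $\{v_1\}$ and edge set $\{\{v_1\}\}$. Given the hypergraph of size $N$ (vertices $v_1,\dots,v_N$, exactly $N$ edges), one chooses an existing edge $e$ uniformly at random, independently of the past, and adds a new vertex $v_{N+1}$ together with the new edge $e\cup\{v_{N+1}\}$. The rank of a vertex $v$ is $\min\{|e| : v\in e\}$. $\mathcal{R}_k(N)$ denotes the number of vertices of rank $k$ in the RRH of size $N$ (equivalently, the number of edges of size $k$). *)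

theory Defs
  imports "HOL-Probability.Probability"
begin

text \<open>A hypergraph is represented by its set of edges; vertex v_i is the natural number i.
  All edges of the RRH are distinct (each new edge contains a fresh vertex), so the
  edge set determines the hypergraph and uniform choice of an edge is pmf_of_set.\<close>

type_synonym hgraph = "nat set set"

text \<open>rrh N: the random recursive hypergraph of size N (meaningful for N >= 1).\<close>
fun rrh :: "nat \<Rightarrow> hgraph pmf" where
  "rrh 0 = return_pmf {}"
| "rrh (Suc 0) = return_pmf {{1}}"
| "rrh (Suc (Suc n)) =
     bind_pmf (rrh (Suc n))
       (\<lambda>E. map_pmf (\<lambda>e. insert (insert (Suc (Suc n)) e) E) (pmf_of_set E))"

definition vertices :: "hgraph \<Rightarrow> nat set" where
  "vertices E = \<Union>E"

definition rank :: "hgraph \<Rightarrow> nat \<Rightarrow> nat" where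
  "rank E v = Min {card e | e. e \<in> E \<and> v \<in> e}"

definition Rk :: "nat \<Rightarrow> hgraph \<Rightarrow> nat" where
  "Rk k E = card {v \<in> vertices E. rank E v = k}"

definition ERk :: "nat \<Rightarrow> nat \<Rightarrow> real" where
  "ERk k N = measure_pmf.expectation (rrh N) (\<lambda>E. real (Rk k E))"

end

theory Submission
  imports Defs
begin

definition Inv :: "nat \<Rightarrow> hgraph \<Rightarrow> bool" where
  "Inv N E \<longleftrightarrow> finite E \<and> (\<forall>e\<in>E. finite e \<and> e \<subseteq> {1..N} \<and> 1 \<in> e)
     \<and> bij_betw Max E {1..N} \<and> (\<forall>e\<in>E. \<forall>v\<in>e. \<exists>e0\<in>E. Max e0 = v \<and> e0 \<subseteq> e)"

lemma Inv_1: "Inv 1 {{1}}"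
  unfolding Inv_def by (auto simp: bij_betw_def)

lemma Inv_step:
  assumes I: "Inv (Suc n) E" and e: "e \<in> E"
  shows "Inv (Suc (Suc n)) (insert (insert (Suc (Suc n)) e) E)"
proof -
  let ?e' = "insert (Suc (Suc n)) e"
  have I': "finite E \<and> (\<forall>x\<in>E. finite x \<and> x \<subseteq> {1..Suc n} \<and> 1 \<in> x)
     \<and> bij_betw Max E {1..Suc n} \<and> (\<forall>x\<in>E. \<forall>v\<in>x. \<exists>e0\<in>E. Max e0 = v \<and> e0 \<subseteq> x)"
    using I unfolding Inv_def .
  have fE: "finite E" using I' by (rule conjunct1)
  have B: "\<And>x. x \<in> E \<Longrightarrow> finite x \<and> x \<subseteq> {1..Suc n} \<and> 1 \<in> x"
    using conjunct1[OF conjunct2[OF I']] by (rule bspec)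
  have bij: "bij_betw Max E {1..Suc n}" using conjunct1[OF conjunct2[OF conjunct2[OF I']]] .
  have D: "\<And>x v. x \<in> E \<Longrightarrow> v \<in> x \<Longrightarrow> \<exists>e0\<in>E. Max e0 = v \<and> e0 \<subseteq> x"
    using conjunct2[OF conjunct2[OF conjunct2[OF I']]] by blast
  have fe: "finite e" and se: "e \<subseteq> {1..Suc n}" and one: "1 \<in> e" using B[OF e] by auto
  have notin: "?e' \<notin> E"
  proof
    assume "?e' \<in> E"
    then have "?e' \<subseteq> {1..Suc n}" using B by blast
    then show False by auto
  qed
  have maxe': "Max ?e' = Suc (Suc n)"
    using fe se one by (intro Max_eqI) auto
  have imE: "Max ` E = {1..Suc n}" and injE: "inj_on Max E" using bij by (auto simp: bij_betw_def)
  have "inj_on Max (insert ?e' E)" using injE notin maxe' imE by simp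
  moreover have "Max ` insert ?e' E = {1..Suc (Suc n)}" using imE maxe' by auto
  ultimately have bij': "bij_betw Max (insert ?e' E) {1..Suc (Suc n)}" by (simp add: bij_betw_def)
  show ?thesis unfolding Inv_def
  proof (intro conjI)
    show "finite (insert ?e' E)" using fE by simp
    show "\<forall>x\<in>insert ?e' E. finite x \<and> x \<subseteq> {1..Suc (Suc n)} \<and> 1 \<in> x"
    proof
      fix x assume "x \<in> insert ?e' E"
      then consider "x = ?e'" | "x \<in> E" by blast
      then show "finite x \<and> x \<subseteq> {1..Suc (Suc n)} \<and> 1 \<in> x"
      proof cases
        case 1 then show ?thesis using fe se one by auto
      next
        case 2 then show ?thesis using B[of x] by auto
      qed
    qed
    show "bij_betw Max (insert ?e' E) {1..Suc (Suc n)}" by (rule bij')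
    show "\<forall>x\<in>insert ?e' E. \<forall>v\<in>x. \<exists>e0\<in>insert ?e' E. Max e0 = v \<and> e0 \<subseteq> x"
    proof (intro ballI)
      fix x v assume x: "x \<in> insert ?e' E" and v: "v \<in> x"
      show "\<exists>e0\<in>insert ?e' E. Max e0 = v \<and> e0 \<subseteq> x"
      proof (cases "x = ?e'")
        case True
        show ?thesis
        proof (cases "v = Suc (Suc n)")
          case True then show ?thesis using maxe' \<open>x = ?e'\<close> by blast
        next
          case False
          then have "v \<in> e" using v \<open>x = ?e'\<close> by auto
          then obtain e0 where "e0 \<in> E" "Max e0 = v" "e0 \<subseteq> e" using D[OF e] by blast
          then show ?thesis using \<open>x = ?e'\<close> by blast
        qed
      next
        case False
        then have "x \<in> E" using x by auto
        then show ?thesis using D[OF _ v] by blast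
      qed
    qed
  qed
qed

lemma Inv_rrh: "E \<in> set_pmf (rrh (Suc n)) \<Longrightarrow> Inv (Suc n) E \<and> finite (set_pmf (rrh (Suc n)))"
proof (induction n arbitrary: E)
  case 0
  then show ?case using Inv_1 by simp
next
  case (Suc n)
  have IH: "\<And>E. E \<in> set_pmf (rrh (Suc n)) \<Longrightarrow> Inv (Suc n) E" using Suc.IH by blast
  have fin: "finite (set_pmf (rrh (Suc n)))"
    using Suc.IH set_pmf_not_empty[of "rrh (Suc n)"] by blast
  have ne: "\<And>E. Inv (Suc n) E \<Longrightarrow> finite E \<and> E \<noteq> {}"
    unfolding Inv_def bij_betw_def by auto
  have "finite (set_pmf (rrh (Suc (Suc n))))"
    using fin ne IH by (auto simp: set_bind_pmf)
  moreover have "Inv (Suc (Suc n)) E"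
    using Suc.prems ne IH by (auto simp: set_bind_pmf intro: Inv_step)
  ultimately show ?case by simp
qed

definition cnt :: "nat \<Rightarrow> hgraph \<Rightarrow> nat" where
  "cnt k E = card {e \<in> E. card e = k}"

lemma Inv_D:
  assumes "Inv N E"
  shows "finite E" "\<And>x. x \<in> E \<Longrightarrow> finite x \<and> x \<subseteq> {1..N} \<and> 1 \<in> x"
    "bij_betw Max E {1..N}"
    "\<And>x v. x \<in> E \<Longrightarrow> v \<in> x \<Longrightarrow> \<exists>e0\<in>E. Max e0 = v \<and> e0 \<subseteq> x"
proof -
  have I': "finite E \<and> (\<forall>x\<in>E. finite x \<and> x \<subseteq> {1..N} \<and> 1 \<in> x)
     \<and> bij_betw Max E {1..N} \<and> (\<forall>x\<in>E. \<forall>v\<in>x. \<exists>e0\<in>E. Max e0 = v \<and> e0 \<subseteq> x)"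
    using assms unfolding Inv_def .
  show "finite E" using I' by (rule conjunct1)
  show "\<And>x. x \<in> E \<Longrightarrow> finite x \<and> x \<subseteq> {1..N} \<and> 1 \<in> x"
    using conjunct1[OF conjunct2[OF I']] by (rule bspec)
  show "bij_betw Max E {1..N}" using conjunct1[OF conjunct2[OF conjunct2[OF I']]] .
  show "\<And>x v. x \<in> E \<Longrightarrow> v \<in> x \<Longrightarrow> \<exists>e0\<in>E. Max e0 = v \<and> e0 \<subseteq> x"
    using conjunct2[OF conjunct2[OF conjunct2[OF I']]] by blast
qed

lemma Inv_Max_in: "Inv N E \<Longrightarrow> e \<in> E \<Longrightarrow> Max e \<in> e"
  using Inv_D(2)[of N E e] by (intro Max_in) auto

lemma Inv_rank:
  assumes I: "Inv N E" and e: "e \<in> E"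
  shows "rank E (Max e) = card e"
proof -
  have inj: "inj_on Max E" using Inv_D(3)[OF I] by (simp add: bij_betw_def)
  have "{card x | x. x \<in> E \<and> Max e \<in> x} = card ` {x \<in> E. Max e \<in> x}" by auto
  moreover have "finite (card ` {x \<in> E. Max e \<in> x})" using Inv_D(1)[OF I] by simp
  moreover have "card e \<in> card ` {x \<in> E. Max e \<in> x}" using e Inv_Max_in[OF I e] by blast
  moreover have "\<forall>y \<in> card ` {x \<in> E. Max e \<in> x}. card e \<le> y"
  proof
    fix y assume "y \<in> card ` {x \<in> E. Max e \<in> x}"
    then obtain x where x: "x \<in> E" "Max e \<in> x" "y = card x" by blast
    obtain e0 where e0: "e0 \<in> E" "Max e0 = Max e" "e0 \<subseteq> x" using Inv_D(4)[OF I x(1,2)] by blast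
    have "e0 = e" using inj e0 e by (meson inj_onD)
    then show "card e \<le> y" using e0 x Inv_D(2)[OF I x(1)] by (simp add: card_mono)
  qed
  ultimately show ?thesis unfolding rank_def by (metis (no_types, lifting) Min_eqI)
qed

lemma Inv_vertices: "Inv N E \<Longrightarrow> vertices E = Max ` E"
proof -
  assume I: "Inv N E"
  show ?thesis
  proof
    show "vertices E \<subseteq> Max ` E"
    proof
      fix v assume "v \<in> vertices E"
      then obtain x where "x \<in> E" "v \<in> x" unfolding vertices_def by blast
      then show "v \<in> Max ` E" using Inv_D(4)[OF I] by (metis image_eqI)
    qed
    show "Max ` E \<subseteq> vertices E" unfolding vertices_def using Inv_Max_in[OF I] by blast
  qed
qed

lemma Inv_Rk: assumes I: "Inv N E" shows "Rk k E = cnt k E"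
proof -
  have inj: "inj_on Max E" using Inv_D(3)[OF I] by (simp add: bij_betw_def)
  have "{v \<in> vertices E. rank E v = k} = Max ` {e \<in> E. card e = k}"
    using Inv_vertices[OF I] Inv_rank[OF I] by auto
  then show ?thesis unfolding Rk_def cnt_def
    by (metis (no_types, lifting) card_image inj inj_on_subset mem_Collect_eq subsetI)
qed

lemma Inv_cnt1: assumes I: "Inv N E" and N: "N \<ge> 1" shows "cnt 1 E = 1"
proof -
  have "1 \<in> Max ` E" using Inv_D(3)[OF I] N by (auto simp: bij_betw_def)
  then obtain e where e: "e \<in> E" "Max e = 1" by auto
  have "e = {1}"
  proof
    show "e \<subseteq> {1}"
    proof
      fix x assume "x \<in> e"
      then have "x \<le> 1" "x \<ge> 1" using e Inv_D(2)[OF I e(1)] by (metis Max_ge, auto)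
      then show "x \<in> {1}" by simp
    qed
    show "{1} \<subseteq> e" using Inv_D(2)[OF I e(1)] by auto
  qed
  have "{x \<in> E. card x = 1} = {{1}}"
  proof
    show "{x \<in> E. card x = 1} \<subseteq> {{1}}"
    proof
      fix x assume "x \<in> {x \<in> E. card x = 1}"
      then have "x \<in> E" "card x = 1" by auto
      then show "x \<in> {{1}}" using Inv_D(2)[OF I] by (metis card_1_singletonE singletonD singletonI)
    qed
    show "{{1}} \<subseteq> {x \<in> E. card x = 1}" using e \<open>e = {1}\<close> by auto
  qed
  then show ?thesis unfolding cnt_def by simp
qed

lemma Inv_cnt0: assumes I: "Inv N E" shows "cnt 0 E = 0"
proof -
  have h: "{x \<in> E. card x = 0} = {}"
  proof (rule ccontr)
    assume "{x \<in> E. card x = 0} \<noteq> {}"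
    then obtain x where "x \<in> E" "card x = 0" by auto
    then show False using Inv_D(2)[OF I, of x] by auto
  qed
  show ?thesis unfolding cnt_def h by simp
qed

lemma Inv_card: "Inv N E \<Longrightarrow> card E = N"
  using Inv_D(3) bij_betw_same_card by fastforce

lemma cnt_step:
  assumes I: "Inv (Suc n) E" and e: "e \<in> E"
  shows "cnt k (insert (insert (Suc (Suc n)) e) E) = cnt k E + (if card e + 1 = k then 1 else 0)"
proof -
  let ?e' = "insert (Suc (Suc n)) e"
  have B: "finite e \<and> e \<subseteq> {1..Suc n} \<and> 1 \<in> e" using Inv_D(2)[OF I e] .
  have notin: "?e' \<notin> E"
  proof
    assume "?e' \<in> E"
    then have "?e' \<subseteq> {1..Suc n}" using Inv_D(2)[OF I] by blast
    then show False by auto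
  qed
  have "Suc (Suc n) \<notin> e" using B by auto
  then have ce: "card ?e' = card e + 1" using B by simp
  have fE: "finite E" using Inv_D(1)[OF I] .
  show ?thesis
  proof (cases "card e + 1 = k")
    case True
    then have "{x \<in> insert ?e' E. card x = k} = insert ?e' {x \<in> E. card x = k}" using ce by auto
    then show ?thesis unfolding cnt_def using notin fE True by simp
  next
    case False
    then have "{x \<in> insert ?e' E. card x = k} = {x \<in> E. card x = k}" using ce by auto
    then show ?thesis unfolding cnt_def using False by simp
  qed
qed

definition F :: "nat \<Rightarrow> nat \<Rightarrow> real" where
  "F k N = measure_pmf.expectation (rrh N) (\<lambda>E. real (cnt k E))"

lemma ERk_F: "ERk k (Suc n) = F k (Suc n)"
  unfolding ERk_def F_def
  by (intro integral_cong_AE) (auto intro!: AE_pmfI simp: Inv_Rk[OF conjunct1[OF Inv_rrh]])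

lemma expect_fin:
  fixes f :: "'a \<Rightarrow> real"
  assumes "finite (set_pmf p)"
  shows "measure_pmf.expectation p f = (\<Sum>a\<in>set_pmf p. pmf p a * f a)"
  using assms by (subst integral_measure_pmf[of "set_pmf p"]) auto

lemma F_rec: "F (Suc k) (Suc (Suc n)) = F (Suc k) (Suc n) + F k (Suc n) / real (Suc n)"
proof -
  let ?p = "rrh (Suc n)"
  let ?f = "\<lambda>E. map_pmf (\<lambda>e. insert (insert (Suc (Suc n)) e) E) (pmf_of_set E)"
  let ?A = "set_pmf ?p"
  have finA: "finite ?A" using Inv_rrh set_pmf_not_empty[of ?p] by blast
  have IA: "\<And>E. E \<in> ?A \<Longrightarrow> Inv (Suc n) E" using Inv_rrh by blast
  have neE: "\<And>E. E \<in> ?A \<Longrightarrow> finite E \<and> E \<noteq> {}"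
    using IA Inv_D(1) Inv_card by fastforce
  have inner: "measure_pmf.expectation (?f E) (\<lambda>E. real (cnt (Suc k) E))
      = real (cnt (Suc k) E) + real (cnt k E) / real (Suc n)" if E: "E \<in> ?A" for E
  proof -
    have I: "Inv (Suc n) E" using IA E .
    have fE: "finite E" "E \<noteq> {}" using neE E by auto
    have "measure_pmf.expectation (?f E) (\<lambda>E. real (cnt (Suc k) E))
        = measure_pmf.expectation (pmf_of_set E)
            (\<lambda>e. real (cnt (Suc k) E) + (if card e = k then 1 else 0))"
      by (simp add: integral_map_pmf) (intro integral_cong_AE, auto intro!: AE_pmfI simp: cnt_step[OF I] fE)
    also have "\<dots> = (\<Sum>e\<in>E. real (cnt (Suc k) E) + (if card e = k then 1 else 0)) / real (card E)"
      using fE by (simp add: integral_pmf_of_set)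
    also have "\<dots> = (real (card E) * real (cnt (Suc k) E) + real (cnt k E)) / real (card E)"
    proof -
      have "(\<Sum>e\<in>E. if card e = k then 1 else (0::real)) = real (card {e\<in>E. card e = k})"
        using fE by (simp add: sum.inter_filter[symmetric])
      then show ?thesis by (simp add: sum.distrib cnt_def)
    qed
    also have "\<dots> = real (cnt (Suc k) E) + real (cnt k E) / real (Suc n)"
      using Inv_card[OF I] by (simp add: field_simps)
    finally show ?thesis .
  qed
  have "F (Suc k) (Suc (Suc n)) = measure_pmf.expectation (bind_pmf ?p ?f) (\<lambda>E. real (cnt (Suc k) E))"
    unfolding F_def by simp
  also have "\<dots> = (\<Sum>a\<in>?A. pmf ?p a *\<^sub>R measure_pmf.expectation (?f a) (\<lambda>E. real (cnt (Suc k) E)))"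
    using finA neE by (intro pmf_expectation_bind) auto
  also have "\<dots> = (\<Sum>a\<in>?A. pmf ?p a * (real (cnt (Suc k) a) + real (cnt k a) / real (Suc n)))"
    using inner by (intro sum.cong) auto
  also have "\<dots> = (\<Sum>a\<in>?A. pmf ?p a * real (cnt (Suc k) a)) + (\<Sum>a\<in>?A. pmf ?p a * real (cnt k a)) / real (Suc n)"
    by (simp add: sum.distrib distrib_left sum_divide_distrib)
  also have "\<dots> = F (Suc k) (Suc n) + F k (Suc n) / real (Suc n)"
    unfolding F_def using finA by (simp add: expect_fin)
  finally show ?thesis .
qed

lemma F_0: "F 0 (Suc n) = 0"
  unfolding F_def
  by (subst integral_cong_AE[where g="\<lambda>_. 0"]) (auto intro!: AE_pmfI simp: Inv_cnt0[OF conjunct1[OF Inv_rrh]])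

lemma F_base: "F k (Suc 0) = (if k = 1 then 1 else 0)"
proof -
  have "{e. e = {Suc 0} \<and> card e = Suc 0} = {{Suc 0}}" by auto
  then show ?thesis unfolding F_def by (simp add: cnt_def)
qed

definition Sk :: "nat \<Rightarrow> nat \<Rightarrow> real" where
  "Sk k N = (\<Sum>S \<in> {S. S \<subseteq> {1..N} \<and> card S = k}. 1 / (\<Prod>j\<in>S. real j))"

lemma Sk_0: "Sk 0 N = 1"
proof -
  have "{S. S \<subseteq> {1..N} \<and> card S = 0} = {{}}"
  proof (intro equalityI subsetI)
    fix S assume "S \<in> {S. S \<subseteq> {1..N} \<and> card S = 0}"
    then have "S \<subseteq> {1..N}" "card S = 0" by auto
    moreover then have "finite S" using finite_subset by blast
    ultimately show "S \<in> {{}}" by simp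
  qed auto
  then show ?thesis unfolding Sk_def by simp
qed

lemma Sk_Suc_0: "Sk (Suc k) 0 = 0"
proof -
  have "{S. S \<subseteq> {1..0::nat} \<and> card S = Suc k} = {}" by auto
  then show ?thesis unfolding Sk_def by simp
qed

lemma Sk_rec: "Sk (Suc k) (Suc N) = Sk (Suc k) N + Sk k N / real (Suc N)"
proof -
  let ?A = "{S. S \<subseteq> {1..N} \<and> card S = Suc k}"
  let ?T = "{S. S \<subseteq> {1..N} \<and> card S = k}"
  let ?B = "insert (Suc N) ` ?T"
  let ?g = "\<lambda>S. 1 / (\<Prod>j\<in>S. real j)"
  have eq: "{S. S \<subseteq> {1..Suc N} \<and> card S = Suc k} = ?A \<union> ?B"
  proof
    show "{S. S \<subseteq> {1..Suc N} \<and> card S = Suc k} \<subseteq> ?A \<union> ?B"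
    proof
      fix S assume S: "S \<in> {S. S \<subseteq> {1..Suc N} \<and> card S = Suc k}"
      then have fS: "finite S" by (auto intro: finite_subset)
      show "S \<in> ?A \<union> ?B"
      proof (cases "Suc N \<in> S")
        case True
        then have "S = insert (Suc N) (S - {Suc N})" by auto
        moreover have "S - {Suc N} \<in> ?T" using S True fS by auto
        ultimately show ?thesis by blast
      next
        case False
        then have "S \<subseteq> {1..N}" using S by (auto simp: le_Suc_eq)
        then show ?thesis using S by auto
      qed
    qed
    show "?A \<union> ?B \<subseteq> {S. S \<subseteq> {1..Suc N} \<and> card S = Suc k}"
    proof
      fix S assume "S \<in> ?A \<union> ?B"
      then show "S \<in> {S. S \<subseteq> {1..Suc N} \<and> card S = Suc k}"
      proof
        assume "S \<in> ?A" then show ?thesis by auto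
      next
        assume "S \<in> ?B"
        then obtain T where T: "T \<in> ?T" "S = insert (Suc N) T" by blast
        then have "finite T" "Suc N \<notin> T" by (auto intro: finite_subset)
        then show ?thesis using T by auto
      qed
    qed
  qed
  have finA: "finite ?A" by (rule finite_subset[of _ "Pow {1..N}"]) auto
  have finT: "finite ?T" by (rule finite_subset[of _ "Pow {1..N}"]) auto
  have disj: "?A \<inter> ?B = {}" by auto
  have inj: "inj_on (insert (Suc N)) ?T"
  proof (rule inj_onI)
    fix x y assume x: "x \<in> ?T" and y: "y \<in> ?T" and xy: "insert (Suc N) x = insert (Suc N) y"
    have "Suc N \<notin> x" "Suc N \<notin> y" using x y by auto
    then have "x = insert (Suc N) x - {Suc N}" "y = insert (Suc N) y - {Suc N}" by auto
    then show "x = y" using xy by simp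
  qed
  have sumB: "sum ?g ?B = Sk k N / real (Suc N)"
  proof -
    have "sum ?g ?B = sum (?g \<circ> insert (Suc N)) ?T" using inj by (rule sum.reindex)
    also have "\<dots> = (\<Sum>T\<in>?T. ?g T / real (Suc N))"
    proof (rule sum.cong)
      fix T assume T: "T \<in> ?T"
      then have "finite T" "Suc N \<notin> T" by (auto intro: finite_subset)
      then show "(?g \<circ> insert (Suc N)) T = ?g T / real (Suc N)" by simp
    qed simp
    also have "\<dots> = Sk k N / real (Suc N)" unfolding Sk_def by (simp add: sum_divide_distrib)
    finally show ?thesis .
  qed
  have "Sk (Suc k) (Suc N) = sum ?g ?A + sum ?g ?B"
    unfolding Sk_def eq using finA finT disj by (intro sum.union_disjoint) auto
  then show ?thesis using sumB unfolding Sk_def by simp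
qed

lemma F_Sk: "F (Suc k) (Suc N) = Sk k N"
proof (induction N arbitrary: k)
  case 0
  then show ?case by (cases k) (simp_all add: F_base Sk_0 Sk_Suc_0)
next
  case (Suc N)
  show ?case
  proof (cases k)
    case 0
    then show ?thesis using F_rec[of 0 N] Suc.IH[of 0] F_0[of N] by (simp add: Sk_0)
  next
    case (Suc k')
    then show ?thesis using F_rec[of "Suc k'" N] Suc.IH[of "Suc k'"] Suc.IH[of k'] Sk_rec[of k' N]
      by simp
  qed
qed

lemma ERk_Sk: "ERk (Suc k) (Suc N) = Sk k N"
  using ERk_F F_Sk by simp

lemma Sk_diag: "Sk n n = 1 / fact n"
proof -
  have "{S. S \<subseteq> {1..n} \<and> card S = n} = {{1..n}}"
  proof (intro equalityI subsetI)
    fix S assume "S \<in> {S. S \<subseteq> {1..n} \<and> card S = n}"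
    then have "S \<subseteq> {1..n}" "card S = card {1..n}" by auto
    then have "S = {1..n}" by (intro card_subset_eq) auto
    then show "S \<in> {{1..n}}" by simp
  qed auto
  then show ?thesis unfolding Sk_def by (simp add: fact_prod)
qed

lemma Sk_1: "Sk 1 N = (\<Sum>i=1..N. 1 / real i)"
proof (induction N)
  case 0 then show ?case using Sk_Suc_0[of 0] by simp
next
  case (Suc N)
  then show ?case using Sk_rec[of 0 N] by (simp add: Sk_0)
qed

lemma Sk_2: "Sk 2 N = ((\<Sum>i=1..N. 1 / real i)\<^sup>2 - (\<Sum>i=1..N. 1 / (real i)\<^sup>2)) / 2"
proof (induction N)
  case 0 then show ?case using Sk_Suc_0[of 1] by (simp add: numeral_2_eq_2)
next
  case (Suc N)
  have "Sk 2 (Suc N) = Sk 2 N + Sk 1 N / real (Suc N)"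
    using Sk_rec[of 1 N] by (simp add: numeral_2_eq_2)
  define H where "H = (\<Sum>i=1..N. 1 / real i)"
  define H2 where "H2 = (\<Sum>i=1..N. 1 / (real i)\<^sup>2)"
  define x where "x = 1 / real (Suc N)"
  have h1: "(\<Sum>i=1..Suc N. 1 / real i) = H + x" unfolding H_def x_def by simp
  have h2: "(\<Sum>i=1..Suc N. 1 / (real i)\<^sup>2) = H2 + x\<^sup>2" unfolding H2_def x_def
    by (simp add: power_one_over)
  have h3: "Sk 1 N / real (Suc N) = H * x" unfolding x_def H_def Sk_1 by simp
  have "Sk 2 (Suc N) = (H\<^sup>2 - H2) / 2 + H * x"
    using \<open>Sk 2 (Suc N) = _\<close> Suc.IH h3 unfolding H_def H2_def by simp
  also have "\<dots> = ((H + x)\<^sup>2 - (H2 + x\<^sup>2)) / 2" by (simp add: power2_eq_square field_simps)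
  finally show ?case unfolding h1 h2 .
qed


theorem mainTheorem9:
  shows "(\<forall>N k. N \<ge> 1 \<longrightarrow> k \<ge> 1 \<longrightarrow>
            ERk (k + 1) (N + 1) =
              (\<Sum>S \<in> {S. S \<subseteq> {1..N} \<and> card S = k}. 1 / (\<Prod>j\<in>S. real j)))
       \<and> (\<forall>N. N \<ge> 1 \<longrightarrow> (\<forall>E \<in> set_pmf (rrh N). Rk 1 E = 1))
       \<and> (\<forall>N. N \<ge> 1 \<longrightarrow> ERk N N = 1 / fact (N - 1))
       \<and> (\<forall>N. N \<ge> 1 \<longrightarrow>
            ERk 3 (N + 1) = ((\<Sum>i=1..N. 1 / real i)\<^sup>2 - (\<Sum>i=1..N. 1 / (real i)\<^sup>2)) / 2)"
proof (intro conjI allI impI ballI)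
  fix N k :: nat assume "N \<ge> 1" "k \<ge> 1"
  show "ERk (k + 1) (N + 1) = (\<Sum>S \<in> {S. S \<subseteq> {1..N} \<and> card S = k}. 1 / (\<Prod>j\<in>S. real j))"
    using ERk_Sk[of k N] unfolding Sk_def by simp
next
  fix N :: nat and E assume N: "N \<ge> 1" and E: "E \<in> set_pmf (rrh N)"
  obtain n where n: "N = Suc n" using N by (cases N) auto
  have I: "Inv N E" using Inv_rrh E n by blast
  show "Rk 1 E = 1" using Inv_Rk[OF I] Inv_cnt1[OF I N] by simp
next
  fix N :: nat assume N: "N \<ge> 1"
  obtain n where n: "N = Suc n" using N by (cases N) auto
  show "ERk N N = 1 / fact (N - 1)" using ERk_Sk[of n n] Sk_diag[of n] n by simp
next
  fix N :: nat assume N: "N \<ge> 1"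
  have "ERk 3 (N + 1) = Sk 2 N" using ERk_Sk[of 2 N] by (simp add: numeral_3_eq_3 numeral_2_eq_2)
  then show "ERk 3 (N + 1) = ((\<Sum>i=1..N. 1 / real i)\<^sup>2 - (\<Sum>i=1..N. 1 / (real i)\<^sup>2)) / 2"
    using Sk_2 by simp
qed

end
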